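(* For all integers $0\le a\le b$, $$\sum_{s=0}^{a}(-1)^sq^{s^2-s}\binom{2b-2s}{2a-2s}_q\binom{b}{s}_{q^2}=q^{2a^2-a}\frac{(q^{2b-4a+2};q^2)_{2a}}{(q;q)_{2a}}.$$
   Context: $(x;t)_m=\prod_{j=0}^{m-1}(1-xt^j)$ is the $q$-Pochhammer symbol and $\binom{c}{d}_t=\prod_{j=0}^{d-1}\frac{1-t^{c-j}}{1-t^{j+1}}$ the $q$-binomial coefficient; identities are of rational functions in $q$. *)

theory Defs
  imports "HOL-Computational_Algebra.Polynomial" "HOL-Computational_Algebra.Fraction_Field"
begin

definition qpoch :: "'a::field \<Rightarrow> 'a \<Rightarrow> nat \<Rightarrow> 'a" where
  "qpoch x t m = (\<Prod>j<m. (1 - x * t ^ j))"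

text \<open>q-binomial coefficient, as the product of quotients (used with d \<le> c)\<close>
definition qbinom :: "nat \<Rightarrow> nat \<Rightarrow> 'a::field \<Rightarrow> 'a" where
  "qbinom c d t = (\<Prod>j<d. (1 - t ^ (c - j)) / (1 - t ^ (j + 1)))"

definition qX :: "rat poly fract" where
  "qX = Fract [:0, 1:] 1"

end

theory Submission
  imports Defs
begin


lemma qbinom_Suc:
  "qbinom n (Suc k) t = qbinom n k t * ((1 - t^(n-k)) / (1 - t^(k+1)))"
  unfolding qbinom_def by simp

lemma qbinom_Suc':
  assumes "1 - t^(k+1) \<noteq> (0::'a::field)"
  shows "qbinom n (Suc k) t * (1 - t^(k+1)) = qbinom n k t * (1 - t^(n-k))"
  using assms by (simp add: qbinom_Suc)

lemma qbinom_0 [simp]: "qbinom n 0 t = 1" unfolding qbinom_def by simp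

lemma qbinom_SucSuc:
  fixes t :: "'a::field"
  assumes nz: "\<And>j. 1 - t^(Suc j) \<noteq> 0"
  shows "qbinom (Suc n) (Suc k) t * (1 - t^(Suc k)) = (1 - t^(Suc n)) * qbinom n k t"
proof (induction k)
  case 0
  show ?case using nz[of 0] by (simp add: qbinom_Suc)
next
  case (Suc k)
  have e1: "qbinom (Suc n) (Suc (Suc k)) t * (1 - t^(Suc (Suc k))) = qbinom (Suc n) (Suc k) t * (1 - t^(n-k))"
    using qbinom_Suc'[of t "Suc k" "Suc n"] nz[of "Suc k"] by simp
  have e2: "qbinom n (Suc k) t * (1 - t^(Suc k)) = qbinom n k t * (1 - t^(n-k))"
    using qbinom_Suc'[of t k n] nz[of k] by simp
  have A: "((1 - t^(Suc n)) * qbinom n (Suc k) t) * (1 - t^(Suc k)) = (qbinom (Suc n) (Suc k) t * (1 - t^(n-k))) * (1 - t^(Suc k))"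
  proof -
    have "((1 - t^(Suc n)) * qbinom n (Suc k) t) * (1 - t^(Suc k)) = (1 - t^(Suc n)) * (qbinom n (Suc k) t * (1 - t^(Suc k)))" by (simp only: mult.assoc)
    also have "\<dots> = (1 - t^(Suc n)) * (qbinom n k t * (1 - t^(n-k)))" by (simp only: e2)
    also have "\<dots> = ((1 - t^(Suc n)) * qbinom n k t) * (1 - t^(n-k))" by (simp only: mult.assoc)
    also have "\<dots> = (qbinom (Suc n) (Suc k) t * (1 - t ^ Suc k)) * (1 - t^(n-k))" by (simp only: Suc.IH)
    also have "\<dots> = (qbinom (Suc n) (Suc k) t * (1 - t^(n-k))) * (1 - t^(Suc k))" by (simp only: mult_ac)
    finally show ?thesis .
  qed
  then have "(1 - t^(Suc n)) * qbinom n (Suc k) t = qbinom (Suc n) (Suc k) t * (1 - t^(n-k))"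
    using nz[of k] by simp
  then show ?case using e1 by simp
qed

lemma poly_id: fixes q w Z Y :: "'a::comm_ring_1" shows
"(q*(w*Z)^2) * ((1 - q*w*Z)*(1 - q^2*w*Z)) * ((1 - q^2*Y)*(1 - q*Y)) - (q^2*w^2*Z^2 - q^2*w*Z*Y)*(w^2*Z^2 - q^2*w*Z*Y)*((1 - q*Z)*(1 - q^2*Z))
 = (q*(w*Z)^2) * (- w * (1 - q^2*Z)*(1 - q*Z) * (-1 - q^3*w*Z*Y + (1+q)*(q*Y) + q*w*Z^2 - q*Z*Y) - (1 - q^3*Z*Y)*(1 - w)*(-1 - q^3*w*Z*Y + (1+q)*(q*Y) + q^3*w*Z^2 - q^3*Z*Y))"
  by (simp add: algebra_simps power2_eq_square power3_eq_cube)


definition Fs :: "'a::field \<Rightarrow> nat \<Rightarrow> nat \<Rightarrow> nat \<Rightarrow> 'a" where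
  "Fs q b a s = (-1) ^ s * q ^ (s^2 - s) * qbinom (2*b - 2*s) (2*a - 2*s) q * qbinom b s (q ^ 2)"

definition Kc :: "'a::field \<Rightarrow> nat \<Rightarrow> nat \<Rightarrow> nat \<Rightarrow> 'a" where
  "Kc q b a s = - 1 - q^(2*b+1) + (1+q)*q^(2*b-2*a-1) + q^(4*a+3-2*s) - q^(2*b+1-2*s)"

definition Gc :: "'a::field \<Rightarrow> nat \<Rightarrow> nat \<Rightarrow> nat \<Rightarrow> 'a" where
  "Gc q b a s = Fs q b (Suc a) s * (1 - q^(2*b+1-2*s)) * (1 - q^(2*s)) * Kc q b a s"

lemma ring2: fixes x0 :: "'a::comm_ring_1"
  assumes "x2*a2 = x1*c1" "x1*a1 = x0*c0" shows "x2*a1*a2 = c0*c1*x0"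
proof -
  have "x2*a1*a2 = (x2*a2)*a1" by (simp add: mult_ac)
  also have "\<dots> = (x1*a1)*c1" using assms(1) by (simp add: mult_ac)
  also have "\<dots> = c0*c1*x0" using assms(2) by (simp add: mult_ac)
  finally show ?thesis .
qed

lemma ring3: fixes x0 :: "'a::comm_ring_1"
  assumes "x2*a2 = c2*x1" "x1*a1 = c1*x0" shows "x0*c1*c2 = x2*a1*a2"
proof -
  have "x0*c1*c2 = (c1*x0)*c2" by (simp add: mult_ac)
  also have "\<dots> = (x1*a1)*c2" using assms(2) by simp
  also have "\<dots> = (c2*x1)*a1" by (simp add: mult_ac)
  also have "\<dots> = x2*a1*a2" using assms(1) by (simp add: mult_ac)
  finally show ?thesis .
qed

lemma qpoch_0 [simp]: "qpoch x t 0 = 1" unfolding qpoch_def by simp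

lemma qpoch_Suc: "qpoch x t (Suc m) = qpoch x t m * (1 - x * t^m)"
  unfolding qpoch_def by simp

lemma qpoch_shift: "qpoch x t (Suc m) = (1 - x) * qpoch (x*t) t m"
  unfolding qpoch_def prod.lessThan_Suc_shift by (simp add: mult_ac)

definition LL :: "'a::field \<Rightarrow> nat \<Rightarrow> nat \<Rightarrow> 'a" where
  "LL q b a = (\<Sum>s=0..a. Fs q b a s)"

definition RR :: "'a::field \<Rightarrow> nat \<Rightarrow> nat \<Rightarrow> 'a" where
  "RR q b a = q ^ (2*a^2 - a) * qpoch (q powi (2 * int b - 4 * int a + 2)) (q ^ 2) (2*a) / qpoch q q (2*a)"

lemma field_comb: fixes D :: "'a::field"
  assumes "D \<noteq> 0" "Q \<noteq> 0" "E1 = c2*(1-x)" "E2 = c0*(1-x*t)" "c2*c0 = c1*c1"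
  shows "c1*D*(g*c1*((1-x)*(1-x*t)*P)/(Q*D)) = (E1*E2)*(g*P/Q)"
proof -
  have "E1*E2 = (c2*c0)*((1-x)*(1-x*t))" by (simp add: assms(3,4) mult_ac)
  then have e: "E1*E2 = c1*c1*((1-x)*(1-x*t))" using assms(5) by simp
  show ?thesis unfolding e using assms(1,2) by (simp add: field_simps)
qed

lemma lift: fixes A :: "'a::comm_ring_1"
  assumes "A*D*N - E*(x*y) = A*(- w*u1*u2*K1 - v1*v2*K0)"
  shows "A*D*N*T - E*(T*x*y) = A*(- w*u1*u2*T*K1 - T*v1*v2*K0)"
proof -
  have "T*(A*D*N - E*(x*y)) = T*(A*(- w*u1*u2*K1 - v1*v2*K0))" using assms by simp
  then show ?thesis by (simp add: algebra_simps)
qed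

lemma sign_step: "(-1::'a::field)^(Suc s) * q^((Suc s)^2 - Suc s) = -(q^(2*s)) * ((-1)^s * q^(s^2-s))"
proof -
  have "(Suc s)^2 - Suc s = (s^2 - s) + 2*s" by (simp add: power2_eq_square)
  then show ?thesis by (simp add: power_add)
qed

context
  fixes q :: "'a::field"
  assumes hq: "\<And>n. n > 0 \<Longrightarrow> q^n \<noteq> 1"
begin

lemma nz: "n > 0 \<Longrightarrow> 1 - q^n \<noteq> 0" using hq by auto

lemma nzS: "1 - q^(Suc j) \<noteq> 0" by (rule nz) simp

lemma nzS': "1 - q^(j+1) \<noteq> 0" by (rule nz) simp

lemma nzS2: "1 - (q^2)^(Suc j) \<noteq> 0"
proof -
  have "(q^2)^(Suc j) = q^(2*Suc j)" by (rule power_mult[symmetric])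
  then show ?thesis using nz[of "2*Suc j"] by simp
qed

lemma R1:
  assumes "s \<le> a" "a < b"
  shows "Fs q b (Suc a) s * (1 - q^(2*a-2*s+1)) * (1 - q^(2*a-2*s+2))
       = ((1 - q^(2*b-2*a))*(1 - q^(2*b-2*a-1))) * Fs q b a s"
proof -
  define n0 where "n0 = 2*b - 2*s"
  define k where "k = 2*a - 2*s"
  have i1: "2 * Suc a - 2*s = Suc (Suc k)" using assms unfolding k_def by simp
  have h1: "qbinom n0 (Suc (Suc k)) q * (1 - q^(Suc k+1)) = qbinom n0 (Suc k) q * (1 - q^(n0 - Suc k))"
    by (rule qbinom_Suc', rule nzS')
  have h2: "qbinom n0 (Suc k) q * (1 - q^(k+1)) = qbinom n0 k q * (1 - q^(n0 - k))"
    by (rule qbinom_Suc', rule nzS')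
  have e1: "n0 - Suc k = 2*b-2*a-1" "n0 - k = 2*b-2*a" "Suc k + 1 = 2*a-2*s+2" "k+1 = 2*a-2*s+1"
    using assms unfolding n0_def k_def by auto
  have main: "qbinom n0 (Suc (Suc k)) q * (1 - q^(k+1)) * (1 - q^(Suc k+1))
      = (1 - q^(n0 - k)) * (1 - q^(n0 - Suc k)) * qbinom n0 k q"
    using ring2[OF h1 h2] .
  define c where "c = (-1::'a) ^ s * q ^ (s^2 - s)"
  define B where "B = qbinom b s (q ^ 2)"
  have F1: "Fs q b (Suc a) s = c * qbinom n0 (Suc (Suc k)) q * B"
    unfolding Fs_def i1 n0_def[symmetric] c_def B_def ..
  have F0: "Fs q b a s = c * qbinom n0 k q * B"
    unfolding Fs_def n0_def[symmetric] k_def[symmetric] c_def B_def ..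
  have "Fs q b (Suc a) s * (1 - q^(2*a-2*s+1)) * (1 - q^(2*a-2*s+2))
      = c*B*(qbinom n0 (Suc (Suc k)) q * (1 - q^(k+1)) * (1 - q^(Suc k+1)))"
    unfolding e1(3,4)[symmetric] by (simp only: F1 mult_ac)
  also have "\<dots> = c*B*((1 - q^(n0 - k)) * (1 - q^(n0 - Suc k)) * qbinom n0 k q)"
    using main by simp
  also have "\<dots> = ((1 - q^(2*b-2*a))*(1 - q^(2*b-2*a-1))) * Fs q b a s"
    unfolding e1(1,2)[symmetric] by (simp only: F0 mult_ac diff_Suc_eq_diff_pred diff_commute)
  finally show ?thesis .
qed


lemma R2:
  assumes "s \<le> a" "a < b"
  shows "Fs q b (Suc a) (Suc s) * (1 - q^(2*b+1-2*Suc s)) * (1 - q^(2*Suc s))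
       = - (q^(2*s)) * (1 - q^(2*a+2-2*s)) * (1 - q^(2*a+1-2*s)) * Fs q b (Suc a) s"
proof -
  define n' where "n' = 2*b - 2*Suc s"
  define k' where "k' = 2*a - 2*s"
  have i1: "2*b - 2*s = Suc (Suc n')" using assms unfolding n'_def by simp
  have i2: "2*Suc a - 2*Suc s = k'" unfolding k'_def by simp
  have i3: "2*Suc a - 2*s = Suc (Suc k')" using assms unfolding k'_def by simp
  have j: "2*b+1-2*Suc s = Suc n'" "2*a+2-2*s = Suc (Suc k')" "2*a+1-2*s = Suc k'"
    using assms unfolding n'_def k'_def by auto
  have e2: "2*(b-s) = Suc (Suc n')" using assms unfolding n'_def by simp
  have j2: "(q^2)^(s+1) = q^(2*Suc s)" "(q^2)^(b-s) = q^(Suc (Suc n'))"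
    using power_mult[of q 2 "s+1"] power_mult[of q 2 "b-s"] e2 by simp_all
  have h1: "qbinom (Suc (Suc n')) (Suc (Suc k')) q * (1 - q^(Suc (Suc k'))) = (1 - q^(Suc (Suc n'))) * qbinom (Suc n') (Suc k') q"
    by (rule qbinom_SucSuc, rule nzS)
  have h2: "qbinom (Suc n') (Suc k') q * (1 - q^(Suc k')) = (1 - q^(Suc n')) * qbinom n' k' q"
    by (rule qbinom_SucSuc, rule nzS)
  have h3: "qbinom b (Suc s) (q^2) * (1 - (q^2)^(s+1)) = qbinom b s (q^2) * (1 - (q^2)^(b-s))"
    by (rule qbinom_Suc') (metis nzS2 Suc_eq_plus1)
  have main: "qbinom n' k' q * (1 - q^(Suc n')) * (1 - q^(Suc (Suc n'))) = qbinom (Suc (Suc n')) (Suc (Suc k')) q * (1 - q^(Suc k')) * (1 - q^(Suc (Suc k')))"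
    using ring3[OF h1 h2] .
  define c where "c = (-1::'a) ^ s * q ^ (s^2 - s)"
  define B0 where "B0 = qbinom b s (q ^ 2)"
  define B1 where "B1 = qbinom b (Suc s) (q ^ 2)"
  have F1: "Fs q b (Suc a) (Suc s) = - (q^(2*s)) * c * qbinom n' k' q * B1"
    unfolding Fs_def i2 n'_def[symmetric] c_def B1_def sign_step by (simp only: mult_ac)
  have F0: "Fs q b (Suc a) s = c * qbinom (Suc (Suc n')) (Suc (Suc k')) q * B0"
    unfolding Fs_def i1 i3 c_def B0_def ..
  have h3': "B1 * (1 - q^(2*Suc s)) = B0 * (1 - q^(Suc (Suc n')))"
    using h3 unfolding j2 B0_def B1_def .
  have "Fs q b (Suc a) (Suc s) * (1 - q^(2*b+1-2*Suc s)) * (1 - q^(2*Suc s))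
      = - (q^(2*s)) * c * (qbinom n' k' q * (1 - q^(Suc n'))) * (B1 * (1 - q^(2*Suc s)))"
    unfolding j by (simp only: F1 mult_ac)
  also have "\<dots> = - (q^(2*s)) * c * B0 * (qbinom n' k' q * (1 - q^(Suc n')) * (1 - q^(Suc (Suc n'))))"
    unfolding h3' by (simp only: mult_ac)
  also have "\<dots> = - (q^(2*s)) * c * B0 * (qbinom (Suc (Suc n')) (Suc (Suc k')) q * (1 - q^(Suc k')) * (1 - q^(Suc (Suc k'))))"
    unfolding main ..
  also have "\<dots> = - (q^(2*s)) * (1 - q^(2*a+2-2*s)) * (1 - q^(2*a+1-2*s)) * Fs q b (Suc a) s"
    unfolding j F0 by (simp only: mult_ac)
  finally show ?thesis .
qed


lemma step_s:
  assumes "s \<le> a" "a < b"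
  shows "q^(4*a+1)*((1 - q^(2*a+1))*(1 - q^(2*a+2)))*((1 - q^(2*b-2*a))*(1 - q^(2*b-2*a-1)))*Fs q b (Suc a) s
    - ((q^(4*a+2) - q^(2*b))*(q^(4*a) - q^(2*b)))*((1 - q^(2*b-2*a))*(1 - q^(2*b-2*a-1)))*Fs q b a s
    = q^(4*a+1)*(Gc q b a (Suc s) - Gc q b a s)"
proof -
  define m where "m = a - s"
  define n where "n = b - a - 1"
  have ab: "a = s + m" "b = s + m + 1 + n" using assms unfolding m_def n_def by auto
  have x0: "q^(4*a+1) = q*(q^(2*s)*q^(2*m))^2"
  proof -
    have h: "4*a+1 = 2*s+2*s+2*m+2*m+1" using ab by simp
    show ?thesis unfolding h by (simp only: power_add power_one_right) (simp add: power2_eq_square mult_ac)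
  qed
  have x1: "q^(2*a+1) = q*q^(2*s)*q^(2*m)"
  proof -
    have h: "2*a+1 = 2*s+2*m+1" using ab by simp
    show ?thesis unfolding h by (simp only: power_add power_one_right) (simp add: power2_eq_square mult_ac)
  qed
  have x2: "q^(2*a+2) = q^2*q^(2*s)*q^(2*m)"
  proof -
    have h: "2*a+2 = 2*s+2*m+2" using ab by simp
    show ?thesis unfolding h by (simp only: power_add power_one_right) (simp add: power2_eq_square mult_ac)
  qed
  have x3: "q^(2*b-2*a) = q^2*q^(2*n)"
  proof -
    have h: "2*b-2*a = 2*n+2" using ab by simp
    show ?thesis unfolding h by (simp only: power_add power_one_right) (simp add: power2_eq_square mult_ac)
  qed
  have x4: "q^(2*b-2*a-1) = q*q^(2*n)"
  proof -
    have h: "2*b-2*a-1 = 2*n+1" using ab by simp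
    show ?thesis unfolding h by (simp only: power_add power_one_right) (simp add: power2_eq_square mult_ac)
  qed
  have x5: "q^(4*a+2) = q^2*(q^(2*s))^2*(q^(2*m))^2"
  proof -
    have h: "4*a+2 = 2*s+2*s+2*m+2*m+2" using ab by simp
    show ?thesis unfolding h by (simp only: power_add power_one_right) (simp add: power2_eq_square mult_ac)
  qed
  have x6: "q^(2*b) = q^2*q^(2*s)*q^(2*m)*q^(2*n)"
  proof -
    have h: "2*b = 2*s+2*m+2*n+2" using ab by simp
    show ?thesis unfolding h by (simp only: power_add power_one_right) (simp add: power2_eq_square mult_ac)
  qed
  have x7: "q^(4*a) = (q^(2*s))^2*(q^(2*m))^2"
  proof -
    have h: "4*a = 2*s+2*s+2*m+2*m" using ab by simp
    show ?thesis unfolding h by (simp only: power_add power_one_right) (simp add: power2_eq_square mult_ac)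
  qed
  have x8: "q^(2*a-2*s+1) = q*q^(2*m)"
  proof -
    have h: "2*a-2*s+1 = 2*m+1" using ab by simp
    show ?thesis unfolding h by (simp only: power_add power_one_right) (simp add: power2_eq_square mult_ac)
  qed
  have x9: "q^(2*a-2*s+2) = q^2*q^(2*m)"
  proof -
    have h: "2*a-2*s+2 = 2*m+2" using ab by simp
    show ?thesis unfolding h by (simp only: power_add power_one_right) (simp add: power2_eq_square mult_ac)
  qed
  have x10: "q^(2*b+1-2*s) = q^3*q^(2*m)*q^(2*n)"
  proof -
    have h: "2*b+1-2*s = 2*m+2*n+3" using ab by simp
    show ?thesis unfolding h by (simp only: power_add power_one_right) (simp add: power2_eq_square mult_ac)
  qed
  have x11: "q^(2*b+1) = q^3*q^(2*s)*q^(2*m)*q^(2*n)"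
  proof -
    have h: "2*b+1 = 2*s+2*m+2*n+3" using ab by simp
    show ?thesis unfolding h by (simp only: power_add power_one_right) (simp add: power2_eq_square mult_ac)
  qed
  have x12: "q^(4*a+3-2*Suc s) = q*q^(2*s)*(q^(2*m))^2"
  proof -
    have h: "4*a+3-2*Suc s = 2*s+2*m+2*m+1" using ab by simp
    show ?thesis unfolding h by (simp only: power_add power_one_right) (simp add: power2_eq_square mult_ac)
  qed
  have x13: "q^(2*b+1-2*Suc s) = q*q^(2*m)*q^(2*n)"
  proof -
    have h: "2*b+1-2*Suc s = 2*m+2*n+1" using ab by simp
    show ?thesis unfolding h by (simp only: power_add power_one_right) (simp add: power2_eq_square mult_ac)
  qed
  have x14: "q^(4*a+3-2*s) = q^3*q^(2*s)*(q^(2*m))^2"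
  proof -
    have h: "4*a+3-2*s = 2*s+2*m+2*m+3" using ab by simp
    show ?thesis unfolding h by (simp only: power_add power_one_right) (simp add: power2_eq_square mult_ac)
  qed
  have x15: "q^(2*a+2-2*s) = q^2*q^(2*m)"
  proof -
    have h: "2*a+2-2*s = 2*m+2" using ab by simp
    show ?thesis unfolding h by (simp only: power_add power_one_right) (simp add: power2_eq_square mult_ac)
  qed
  have x16: "q^(2*a+1-2*s) = q*q^(2*m)"
  proof -
    have h: "2*a+1-2*s = 2*m+1" using ab by simp
    show ?thesis unfolding h by (simp only: power_add power_one_right) (simp add: power2_eq_square mult_ac)
  qed
  have x17: "q^(2*Suc s) = q^2*q^(2*s)"
  proof -
    have h: "2*Suc s = 2*s+2" using ab by simp
    show ?thesis unfolding h by (simp only: power_add power_one_right) (simp add: power2_eq_square mult_ac)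
  qed
  note xs = x0 x1 x2 x3 x4 x5 x6 x7 x8 x9 x10 x11 x12 x13 x14 x15 x16 x17

  have eN: "((q^(4*a+2) - q^(2*b))*(q^(4*a) - q^(2*b)))*((1 - q^(2*b-2*a))*(1 - q^(2*b-2*a-1)))*Fs q b a s
     = ((q^(4*a+2) - q^(2*b))*(q^(4*a) - q^(2*b))) * (Fs q b (Suc a) s * (1 - q^(2*a-2*s+1)) * (1 - q^(2*a-2*s+2)))"
    unfolding R1[OF assms] by (simp only: mult.assoc)
  have eG: "Gc q b a (Suc s) = - (q^(2*s)) * (1 - q^(2*a+2-2*s)) * (1 - q^(2*a+1-2*s)) * Fs q b (Suc a) s * Kc q b a (Suc s)"
    unfolding Gc_def R2[OF assms] ..
  show ?thesis
    unfolding eN eG Gc_def[of q b a s]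
    apply (rule lift)
    unfolding Kc_def xs
    by (rule poly_id)
qed


lemma Kc_last:
  assumes "a < b"
  shows "Kc q b a (Suc a) = - ((1 - q^(2*a+1)) * (1 - q^(2*b-2*a)))"
proof -
  define n where "n = b - a - 1"
  have hb: "b = a + 1 + n" using assms unfolding n_def by simp
  have e: "q^(2*b+1) = q^3*q^(2*a)*q^(2*n)" "q^(2*b-2*a-1) = q*q^(2*n)"
    "q^(4*a+3-2*Suc a) = q*q^(2*a)" "q^(2*b+1-2*Suc a) = q*q^(2*n)"
    "q^(2*b-2*a) = q^2*q^(2*n)" "q^(2*a+1) = q*q^(2*a)"
  proof -
    have h: "2*b+1 = 2*a+2*n+3" "2*b-2*a-1 = 2*n+1" "4*a+3-2*Suc a = 2*a+1"
      "2*b+1-2*Suc a = 2*n+1" "2*b-2*a = 2*n+2"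
      using hb by auto
    show "q^(2*b+1) = q^3*q^(2*a)*q^(2*n)" unfolding h by (simp add: power_add mult_ac power2_eq_square)
    show "q^(2*b-2*a-1) = q*q^(2*n)" unfolding h by (simp add: power_add mult_ac power2_eq_square)
    show "q^(4*a+3-2*Suc a) = q*q^(2*a)" unfolding h by (simp add: power_add mult_ac power2_eq_square)
    show "q^(2*b+1-2*Suc a) = q*q^(2*n)" unfolding h by (simp add: power_add mult_ac power2_eq_square)
    show "q^(2*b-2*a) = q^2*q^(2*n)" unfolding h by (simp add: power_add mult_ac power2_eq_square)
    show "q^(2*a+1) = q*q^(2*a)" by (simp add: power_add mult_ac)
  qed
  show ?thesis unfolding Kc_def e by (simp add: algebra_simps power2_eq_square power3_eq_cube)
qed

lemma rec_L:
  assumes "a < b"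
  shows "q^(4*a+1)*((1 - q^(2*a+1))*(1 - q^(2*a+2))) * LL q b (Suc a)
       = ((q^(4*a+2) - q^(2*b))*(q^(4*a) - q^(2*b))) * LL q b a"
proof -
  define A where "A = q^(4*a+1)"
  define D where "D = (1 - q^(2*a+1))*(1 - q^(2*a+2))"
  define N where "N = (1 - q^(2*b-2*a))*(1 - q^(2*b-2*a-1))"
  define E where "E = (q^(4*a+2) - q^(2*b))*(q^(4*a) - q^(2*b))"
  have N0: "N \<noteq> 0" unfolding N_def using assms nz[of "2*b-2*a"] nz[of "2*b-2*a-1"] by simp
  have st: "\<And>s. s \<in> {0..a} \<Longrightarrow> A*D*N*Fs q b (Suc a) s - E*N*Fs q b a s = A*(Gc q b a (Suc s) - Gc q b a s)"
    unfolding A_def D_def N_def E_def using step_s assms by auto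
  have "(\<Sum>s=0..a. A*D*N*Fs q b (Suc a) s - E*N*Fs q b a s) = A*(\<Sum>s=0..a. Gc q b a (Suc s) - Gc q b a s)"
    using st by (simp add: sum_distrib_left)
  also have "\<dots> = A*(Gc q b a (Suc a) - Gc q b a 0)" by (simp add: sum_Suc_diff)
  also have "Gc q b a 0 = 0" unfolding Gc_def by simp
  also have "Gc q b a (Suc a) = - (D*N*Fs q b (Suc a) (Suc a))"
  proof -
    have h: "2*b+1-2*Suc a = 2*b-2*a-1" "2 * Suc a = 2*a+2" using assms by auto
    show ?thesis unfolding Gc_def Kc_last[OF assms] h D_def N_def by (simp add: algebra_simps)
  qed
  finally have S: "A*D*N*(\<Sum>s=0..a. Fs q b (Suc a) s) - E*N*LL q b a = - (A*(D*N*Fs q b (Suc a) (Suc a)))"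
    unfolding LL_def by (simp add: sum_subtractf sum_distrib_left)
  have "N * (A*D*LL q b (Suc a) - E*LL q b a) = A*D*N*(\<Sum>s=0..a. Fs q b (Suc a) s) - E*N*LL q b a + A*(D*N*Fs q b (Suc a) (Suc a))"
    unfolding LL_def by (simp add: algebra_simps)
  also have "\<dots> = 0" using S by simp
  finally have "A*D*LL q b (Suc a) - E*LL q b a = 0" using N0 by simp
  then show ?thesis unfolding A_def D_def E_def by simp
qed


lemma powi_mul:
  assumes "q \<noteq> 0" "e + int k = int n"
  shows "q powi e * q^k = q^n"
proof -
  have "q powi e * q^k = q powi e * q powi (int k)" by (simp only: power_int_of_nat)
  also have "\<dots> = q powi (e + int k)" by (rule power_int_add[symmetric]) (simp add: assms(1))
  also have "\<dots> = q^n" unfolding assms(2) by (simp only: power_int_of_nat)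
  finally show ?thesis .
qed

lemma powi_mul2:
  assumes "q \<noteq> 0"
  shows "q powi e * q^k = q powi (e + int k)"
proof -
  have "q powi e * q^k = q powi e * q powi (int k)" by (simp only: power_int_of_nat)
  also have "\<dots> = q powi (e + int k)" by (rule power_int_add[symmetric]) (simp add: assms(1))
  finally show ?thesis .
qed

lemma qpoch_nz: "qpoch q q m \<noteq> 0"
  unfolding qpoch_def using nzS by (simp add: prod_zero_iff)

lemma rec_R:
  assumes q0: "q \<noteq> 0"
  shows "q^(4*a+1)*((1 - q^(2*a+1))*(1 - q^(2*a+2))) * RR q b (Suc a)
       = ((q^(4*a+2) - q^(2*b))*(q^(4*a) - q^(2*b))) * RR q b a"
proof -
  define x where "x = q powi (2 * int b - 4 * int (Suc a) + 2)"
  define P where "P = qpoch (q powi (2 * int b - 4 * int a + 2)) (q ^ 2) (2*a)"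
  define Q where "Q = qpoch q q (2*a)"
  define D where "D = (1 - q^(2*a+1))*(1 - q^(2*a+2))"
  have xx: "x*q^2*q^2 = q powi (2 * int b - 4 * int a + 2)"
  proof -
    have "x*q^2*q^2 = x*q^4" by (simp add: mult.assoc power_add[symmetric])
    also have "\<dots> = q powi (2 * int b - 4 * int a + 2)"
      unfolding x_def powi_mul2[OF q0] by (rule arg_cong[where f="power_int q"]) simp
    finally show ?thesis .
  qed
  have xP: "qpoch x (q^2) (2*Suc a) = (1-x)*(1-x*q^2)*P"
  proof -
    have "2*Suc a = Suc (Suc (2*a))" by simp
    then have "qpoch x (q^2) (2*Suc a) = (1-x)*((1-x*q^2)*qpoch (x*q^2*q^2) (q^2) (2*a))"
      by (simp only: qpoch_shift)
    then show ?thesis unfolding xx P_def by (simp add: mult_ac)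
  qed
  have Q2: "qpoch q q (2*Suc a) = Q*D"
  proof -
    have "2*Suc a = Suc (Suc (2*a))" by simp
    then have "qpoch q q (2*Suc a) = Q*(1 - q*q^(2*a))*(1 - q*q^(Suc (2*a)))"
      unfolding Q_def by (simp only: qpoch_Suc)
    then show ?thesis unfolding D_def by (simp add: mult_ac)
  qed
  have ex: "2*(Suc a)^2 - Suc a = (2*a^2 - a) + (4*a+1)"
    by (simp add: power2_eq_square algebra_simps)
  have RS: "RR q b (Suc a) = q^(2*a^2 - a)*q^(4*a+1)*((1-x)*(1-x*q^2)*P)/(Q*D)"
    unfolding RR_def ex xP[unfolded x_def] Q2 x_def by (simp only: power_add)
  have RA: "RR q b a = q^(2*a^2 - a)*P/Q" unfolding RR_def P_def Q_def ..
  have xb: "x*q^(4*a+2) = q^(2*b)" unfolding x_def by (rule powi_mul[OF q0]) simp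
  have E1: "q^(4*a+2) - q^(2*b) = q^(4*a+2)*(1-x)" unfolding xb[symmetric] by (simp add: algebra_simps)
  have E2: "q^(4*a) - q^(2*b) = q^(4*a)*(1-x*q^2)" unfolding xb[symmetric] by (simp add: algebra_simps power_add power2_eq_square)
  have cc: "q^(4*a+2)*q^(4*a) = q^(4*a+1)*q^(4*a+1)" by (simp add: power_add[symmetric])
  have D0: "D \<noteq> 0" unfolding D_def using nz[of "2*a+1"] nz[of "2*a+2"] by simp
  have Q0: "Q \<noteq> 0" unfolding Q_def by (rule qpoch_nz)
  show ?thesis unfolding RS RA D_def[symmetric]
    by (rule field_comb[OF D0 Q0 E1 E2 cc])
qed


lemma LR:
  assumes q0: "q \<noteq> 0"
  shows "a \<le> b \<Longrightarrow> LL q b a = RR q b a"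
proof (induction a)
  case 0
  show ?case unfolding LL_def RR_def Fs_def by simp
next
  case (Suc a)
  then have ab: "a < b" by simp
  have "q^(4*a+1)*((1 - q^(2*a+1))*(1 - q^(2*a+2))) * LL q b (Suc a)
      = q^(4*a+1)*((1 - q^(2*a+1))*(1 - q^(2*a+2))) * RR q b (Suc a)"
    unfolding rec_L[OF ab] rec_R[OF q0] using Suc by simp
  moreover have "q^(4*a+1)*((1 - q^(2*a+1))*(1 - q^(2*a+2))) \<noteq> 0"
    using q0 nz[of "2*a+1"] nz[of "2*a+2"] by simp
  ultimately show ?case by simp
qed

end

lemma qX_pow: "qX ^ n = Fract ([:0,1:] ^ n) 1"
  unfolding qX_def by (induction n) (simp_all add: One_fract_def)

lemma qX_nz: "qX \<noteq> 0"
  unfolding qX_def Zero_fract_def by (simp add: eq_fract)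

lemma qX_pow_ne1: "n > 0 \<Longrightarrow> qX ^ n \<noteq> 1"
proof
  assume n: "n > 0" and h: "qX ^ n = 1"
  from h have "Fract ([:0,1:] ^ n) 1 = Fract (1::rat poly) 1" by (simp add: qX_pow One_fract_def)
  then have "[:0,1:] ^ n = (1::rat poly)" by (simp add: eq_fract)
  then have "degree ([:0,1:] ^ n :: rat poly) = 0" by simp
  moreover have "degree ([:0,1:] ^ n :: rat poly) = n" by (simp add: degree_power_eq)
  ultimately show False using n by simp
qed

theorem mainTheorem9:
  fixes a b :: nat
  assumes "a \<le> b"
  shows "(\<Sum>s=0..a. (-1) ^ s * qX ^ (s^2 - s) * qbinom (2*b - 2*s) (2*a - 2*s) qX
              * qbinom b s (qX ^ 2))
         = qX ^ (2*a^2 - a) * qpoch (qX powi (2 * int b - 4 * int a + 2)) (qX ^ 2) (2*a)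
              / qpoch qX qX (2*a)"
  using LR[OF qX_pow_ne1 qX_nz assms] unfolding LL_def RR_def Fs_def .

end
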